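(* Let a (continuous) fibration of $\mathbb R^n$ by oriented affine $k$-planes be given, with $q=n-k$, and let $p\colon\mathbb R^n\to\mathbb R^n$ send each point $x$ to the point of the fiber through $x$ nearest to the origin. Then the base space $p(\mathbb R^n)$ is a connected, contractible, $q$-dimensional submanifold of $\mathbb R^n$.
   Context: A fibration of $\mathbb R^n$ by oriented affine $k$-planes is a family of pairwise disjoint oriented affine $k$-planes covering $\mathbb R^n$ which forms a locally trivial bundle, i.e. the map sending a point to its fiber is continuous; fibers need not be skew. *)

theory Defs
  imports "HOL-Analysis.Analysis"
begin

text \<open>A frame of a k-dimensional direction in R^n is an injective matrix
  B :: real^'k^'n (columns = basis vectors). An oriented affine k-plane is
  represented by the pair (underlying point set, orientation), where the
  orientation is the set of all positively oriented frames of its direction,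
  i.e. all B ** T with det T > 0.\<close>

definition oplane :: "real^'n \<Rightarrow> real^'k^'n \<Rightarrow> (real^'n) set \<times> (real^'k^'n) set" where
  "oplane a B = (range (\<lambda>t. a + B *v t), {B ** T | T. det T > 0})"

definition frame :: "real^'k^'n \<Rightarrow> bool" where
  "frame B \<longleftrightarrow> inj ((*v) B)"

definition oriented_affine_plane :: "(real^'n) set \<times> (real^'k^'n) set \<Rightarrow> bool" where
  "oriented_affine_plane P \<longleftrightarrow> (\<exists>a B. frame B \<and> P = oplane a B)"

text \<open>The fibers cover R^n (x lies in F x) and
  are pairwise disjoint (any point y of the fiber through x has the same fiber).
  Continuity of F into the space of oriented affine k-planes (quotient topology
  from point+frame data) means that near every point F is given by continuously
  varying base points and frames.\<close>

definition oriented_plane_fibration ::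
    "(real^'n \<Rightarrow> (real^'n) set \<times> (real^'k^'n) set) \<Rightarrow> bool" where
  "oriented_plane_fibration F \<longleftrightarrow>
     (\<forall>x. oriented_affine_plane (F x)) \<and>
     (\<forall>x. x \<in> fst (F x)) \<and>
     (\<forall>x y. y \<in> fst (F x) \<longrightarrow> F y = F x) \<and>
     (\<forall>x. \<exists>U a B. open U \<and> x \<in> U \<and> continuous_on U a \<and> continuous_on U B \<and>
         (\<forall>y\<in>U. frame (B y) \<and> F y = oplane (a y) (B y)))"

definition top_submanifold :: "nat \<Rightarrow> ('a::euclidean_space) set \<Rightarrow> bool" where
  "top_submanifold q S \<longleftrightarrow>
     (\<forall>x\<in>S. \<exists>V. openin (top_of_set S) V \<and> x \<in> V \<and>
        (\<exists>(T::'a set) W. subspace T \<and> dim T = q \<and> openin (top_of_set T) W \<and> V homeomorphic W))"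

end

theory Submission
  imports Defs
begin

lemma cont_det:
  fixes M :: "'a::topological_space \<Rightarrow> real^'m^'m"
  assumes "continuous_on S M"
  shows "continuous_on S (\<lambda>x. det (M x))"
  unfolding det_def by (intro continuous_intros assms)

lemma cont_mv:
  fixes M :: "'a::topological_space \<Rightarrow> real^'m^'n"
  assumes "continuous_on S M" "continuous_on S v"
  shows "continuous_on S (\<lambda>x. M x *v v x)"
  unfolding matrix_vector_mult_def by (intro continuous_intros assms)

lemma cont_mm:
  fixes M :: "'a::topological_space \<Rightarrow> real^'m^'n"
  assumes "continuous_on S M" "continuous_on S N"
  shows "continuous_on S (\<lambda>x. M x ** N x)"
  unfolding matrix_matrix_mult_def by (intro continuous_intros assms)

lemma cont_transpose:
  fixes M :: "'a::topological_space \<Rightarrow> real^'m^'n"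
  assumes "continuous_on S M"
  shows "continuous_on S (\<lambda>x. transpose (M x))"
  unfolding transpose_def by (intro continuous_intros assms)

lemma cont_solve:
  fixes M :: "'a::topological_space \<Rightarrow> real^'m^'m"
  assumes "continuous_on S M" "continuous_on S b" "\<And>x. x \<in> S \<Longrightarrow> det (M x) \<noteq> 0"
  shows "continuous_on S (\<lambda>x. (\<chi> k. det(\<chi> i j. if j=k then b x$i else M x$i$j) / det (M x)))"
proof -
  have "continuous_on S (\<lambda>x. det(\<chi> i j. if j=k then b x$i else M x$i$j))" for k
  proof (rule cont_det)
    have "continuous_on S (\<lambda>x. if j=k then b x$i else M x$i$j)" for i j
      by (cases "j = k") (auto intro!: continuous_intros assms)
    then show "continuous_on S (\<lambda>x. \<chi> i j. if j = k then b x $ i else M x $ i $ j)"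
      by (intro continuous_on_vec_lambda)
  qed
  note * = this
  show ?thesis
  proof (intro continuous_on_vec_lambda continuous_on_divide)
    fix k show "continuous_on S (\<lambda>x. det(\<chi> i j. if j=k then b x$i else M x$i$j))" by (rule *)
    show "continuous_on S (\<lambda>x. det (M x))" by (rule cont_det[OF assms(1)])
    show "\<forall>x\<in>S. det (M x) \<noteq> 0" using assms(3) by auto
  qed
qed

lemma inner_transpose:
  fixes B :: "real^'k^'n"
  shows "inner (transpose B *v q) u = inner q (B *v u)"
  by (simp add: dot_lmul_matrix)

lemma gram_det:
  fixes B :: "real^'k^'n"
  assumes "inj ((*v) B)"
  shows "det (transpose B ** B) \<noteq> 0"
proof -
  have "inj ((*v) (transpose B ** B))"
  proof (rule injI)
    fix x y assume "(transpose B ** B) *v x = (transpose B ** B) *v y"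
    then have "(transpose B ** B) *v (x - y) = 0"
      by (simp add: matrix_vector_mult_diff_distrib)
    then have "inner (transpose B *v (B *v (x - y))) (x - y) = 0"
      by (simp add: matrix_vector_mul_assoc)
    then have "inner (B *v (x - y)) (B *v (x - y)) = 0"
      using inner_transpose[of B "B *v (x - y)" "x - y"] by argo
    then have "B *v (x - y) = 0" by simp
    then have "B *v x = B *v y" by (simp add: matrix_vector_mult_diff_distrib)
    then show "x = y" using assms by (simp add: inj_eq)
  qed
  then show ?thesis
    by (simp add: invertible_det_nz[symmetric] invertible_left_inverse matrix_left_invertible_injective)
qed

lemma plane_props:
  fixes B :: "real^'k^'n"
  shows "closed (range (\<lambda>t. a + B *v t)) \<and> convex (range (\<lambda>t. a + B *v t)) \<and> range (\<lambda>t. a + B *v t) \<noteq> {}"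
proof -
  have e: "range (\<lambda>t. a + B *v t) = (\<lambda>x. a + x) ` range ((*v) B)" by auto
  have s: "subspace (range ((*v) B))"
    by (simp add: subspace_UNIV linear_subspace_image)
  show ?thesis unfolding e
    using s closed_subspace closed_translation subspace_imp_convex convex_translation by blast
qed

lemma closest_char:
  fixes B :: "real^'k^'n"
  assumes "q \<in> range (\<lambda>t. a + B *v t)" "transpose B *v q = 0"
  shows "closest_point (range (\<lambda>t. a + B *v t)) 0 = q"
proof -
  obtain s where s: "q = a + B *v s" using assms by auto
  have "dist 0 q \<le> dist 0 z" if z: "z \<in> range (\<lambda>t. a + B *v t)" for z
  proof -
    obtain t where t: "z = a + B *v t" using z by blast
    have zq: "z = q + B *v (t - s)" by (simp add: s t matrix_vector_mult_diff_distrib)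
    have "inner q (B *v (t - s)) = 0"
      using inner_transpose[of B q "t - s"] assms(2) by simp
    then have "inner z z = inner q q + inner (B *v (t - s)) (B *v (t - s))"
      unfolding zq by (simp add: inner_add inner_commute)
    then have "norm q ^ 2 \<le> norm z ^ 2"
      by (simp add: power2_norm_eq_inner)
    then show ?thesis by (simp add: power2_le_iff_abs_le)
  qed
  then show ?thesis
    using closest_point_unique[of "range (\<lambda>t. a + B *v t)" q 0] plane_props assms(1) by metis
qed


lemma fib_facts:
  fixes F :: "real^'n \<Rightarrow> (real^'n) set \<times> (real^'k^'n) set"
  assumes "oriented_plane_fibration F"
  shows fib_mem: "\<And>x. x \<in> fst (F x)"
    and fib_same: "\<And>x y. y \<in> fst (F x) \<Longrightarrow> F y = F x"
    and fib_loc: "\<And>x. \<exists>U a B. open U \<and> x \<in> U \<and> continuous_on U a \<and> continuous_on U B \<and>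
         (\<forall>y\<in>U. frame (B y) \<and> F y = oplane (a y) (B y))"
  using assms unfolding oriented_plane_fibration_def by blast+

lemma fst_oplane: "fst (oplane a B) = range (\<lambda>t. a + B *v t)"
  by (simp add: oplane_def)

lemma p_loc:
  fixes a :: "'x \<Rightarrow> real^'n" and B :: "'x \<Rightarrow> real^'k^'n"
  assumes "frame (B y)"
  defines "G \<equiv> transpose (B y) ** B y"
  defines "c \<equiv> (\<chi> k. det(\<chi> i j. if j=k then (transpose (B y) *v a y)$i else G$i$j) / det G)"
  shows "closest_point (range (\<lambda>t. a y + B y *v t)) 0 = a y - B y *v c"
proof (rule closest_char)
  have dG: "det G \<noteq> 0" using assms(1) gram_det unfolding G_def frame_def by blast
  have Gc: "G *v c = transpose (B y) *v a y"
    using cramer[OF dG] unfolding c_def by blast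
  have "a y - B y *v c = a y + B y *v (- c)"
    using matrix_vector_mult_diff_distrib[of "B y" 0 c] by simp
  then show "a y - B y *v c \<in> range (\<lambda>t. a y + B y *v t)" by auto
  show "transpose (B y) *v (a y - B y *v c) = 0"
    using Gc unfolding G_def by (simp add: matrix_vector_mult_diff_distrib matrix_vector_mul_assoc)
qed


lemma p_cont:
  fixes F :: "real^'n \<Rightarrow> (real^'n) set \<times> (real^'k^'n) set"
  assumes fib: "oriented_plane_fibration F"
  shows "continuous_on UNIV (\<lambda>x. closest_point (fst (F x)) 0)"
proof -
  have "isCont (\<lambda>x. closest_point (fst (F x)) 0) x0" for x0
  proof -
    obtain U a B where U: "open U" "x0 \<in> U" "continuous_on U a" "continuous_on U B"
      "\<forall>y\<in>U. frame (B y) \<and> F y = oplane (a y) (B y)"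
      using fib_loc[OF fib, of x0] by blast
    define G where "G \<equiv> \<lambda>y. transpose (B y) ** B y"
    define c where "c \<equiv> \<lambda>y. (\<chi> k. det(\<chi> i j. if j=k then (transpose (B y) *v a y)$i else G y$i$j) / det (G y))"
    have cG: "continuous_on U G" unfolding G_def by (intro cont_mm cont_transpose U)
    have cc: "continuous_on U c" unfolding c_def
    proof (rule cont_solve)
      show "continuous_on U G" by (rule cG)
      show "continuous_on U (\<lambda>x. transpose (B x) *v a x)" by (intro cont_mv cont_transpose U)
      show "det (G x) \<noteq> 0" if "x \<in> U" for x
        using U(5) that gram_det unfolding G_def frame_def by blast
    qed
    have "continuous_on U (\<lambda>y. a y - B y *v c y)"
      by (intro continuous_intros cont_mv cc U)
    moreover have "\<forall>y\<in>U. closest_point (fst (F y)) 0 = a y - B y *v c y"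
    proof
      fix y assume "y \<in> U"
      then have "frame (B y)" "F y = oplane (a y) (B y)" using U(5) by auto
      then show "closest_point (fst (F y)) 0 = a y - B y *v c y"
        using p_loc[of B y a] unfolding c_def G_def by (simp add: fst_oplane)
    qed
    ultimately have "continuous_on U (\<lambda>x. closest_point (fst (F x)) 0)"
      using continuous_on_cong by (metis (no_types, lifting))
    then show ?thesis using U(1,2) continuous_on_eq_continuous_at by blast
  qed
  then show ?thesis by (simp add: continuous_on_eq_continuous_at)
qed


lemma manifold_part:
  fixes F :: "real^'n \<Rightarrow> (real^'n) set \<times> (real^'k^'n) set"
  assumes fib: "oriented_plane_fibration F"
  defines "p \<equiv> (\<lambda>x. closest_point (fst (F x)) 0)"
  shows "top_submanifold (CARD('n) - CARD('k)) (range p)"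
proof -
  have pin: "p x \<in> fst (F x)" for x
  proof -
    obtain U a B where "x \<in> U" "\<forall>y\<in>U. frame (B y) \<and> F y = oplane (a y) (B y)"
      using fib_loc[OF fib, of x] by blast
    then have "F x = oplane (a x) (B x)" by auto
    then show ?thesis unfolding p_def
      using plane_props closest_point_in_set by (metis fst_oplane)
  qed
  have Fp: "F (p x) = F x" for x using fib_same[OF fib] pin by blast
  have pp: "p (p x) = p x" for x using Fp unfolding p_def by simp
  have cont: "continuous_on UNIV p" unfolding p_def by (rule p_cont[OF fib])
  show ?thesis unfolding top_submanifold_def
  proof
    fix y0 assume "y0 \<in> range p"
    then have py0: "p y0 = y0" using pp by auto
    obtain U0 a B where U0: "open U0" "y0 \<in> U0" "continuous_on U0 a" "continuous_on U0 B"
      "\<forall>y\<in>U0. frame (B y) \<and> F y = oplane (a y) (B y)"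
      using fib_loc[OF fib, of y0] by blast
    define B0 where "B0 = B y0"
    have fB0: "inj ((*v) B0)" using U0 unfolding B0_def frame_def by blast
    define G0 where "G0 = transpose B0 ** B0"
    have dG0: "det G0 \<noteq> 0" unfolding G0_def by (rule gram_det[OF fB0])
    then obtain H where H: "G0 ** H = mat 1" "H ** G0 = mat 1"
      using invertible_det_nz invertible_def by blast
    define c where "c = (\<lambda>x. H *v (transpose B0 *v (x - y0)))"
    define z where "z = (\<lambda>x. x - B0 *v c x)"
    have tz: "transpose B0 *v (z x - y0) = 0" for x
    proof -
      have "z x - y0 = (x - y0) - B0 *v c x" by (simp add: z_def)
      then have "transpose B0 *v (z x - y0) = transpose B0 *v (x-y0) - transpose B0 *v (B0 *v c x)"
        by (simp only: matrix_vector_mult_diff_distrib)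
      also have "transpose B0 *v (B0 *v c x) = G0 *v c x"
        by (simp only: G0_def matrix_vector_mul_assoc)
      also have "G0 *v c x = transpose B0 *v (x-y0)"
      proof -
        have "G0 *v c x = (G0 ** H) *v (transpose B0 *v (x-y0))"
          unfolding c_def by (rule matrix_vector_mul_assoc)
        then show ?thesis by (simp only: H matrix_vector_mul_lid)
      qed
      finally show ?thesis by simp
    qed
    have c0: "c x = 0 \<longleftrightarrow> transpose B0 *v (x - y0) = 0" for x
    proof
      assume "c x = 0"
      then have "G0 *v c x = 0" by simp
      moreover have "G0 *v c x = (G0 ** H) *v (transpose B0 *v (x-y0))"
        unfolding c_def by (rule matrix_vector_mul_assoc)
      ultimately show "transpose B0 *v (x - y0) = 0" by (simp only: H matrix_vector_mul_lid)
    qed (simp add: c_def)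
    have cy0: "c y0 = 0" by (simp add: c_def)
    have zy0: "z y0 = y0" by (simp add: z_def cy0)
    have contc: "continuous_on UNIV c" unfolding c_def
      by (intro cont_mv continuous_intros)
    have contz: "continuous_on UNIV z" unfolding z_def
      by (intro cont_mv continuous_intros contc)
    define M where "M = (\<lambda>w. transpose B0 ** B w)"
    define \<Omega> where "\<Omega> = U0 \<inter> (\<lambda>w. det (M w)) -` (-{0})"
    have "open \<Omega>" unfolding \<Omega>_def M_def
      by (intro continuous_open_preimage cont_det cont_mm continuous_intros U0)
    define Od where "Od = z -` \<Omega>"
    have openO: "open Od" unfolding Od_def
      by (rule continuous_open_vimage[OF \<open>open \<Omega>\<close>])
         (use contz continuous_on_eq_continuous_at in blast)
    have y0O: "y0 \<in> Od" using U0(2) dG0 unfolding Od_def \<Omega>_def M_def G0_def B0_def by (simp add: zy0)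
    have zO: "z x \<in> U0" "det (M (z x)) \<noteq> 0" if "x \<in> Od" for x
      using that unfolding Od_def \<Omega>_def by auto
    define \<Phi> where "\<Phi> = (\<lambda>x. p (z x) + B (z x) *v c x)"
    have fibmem: "p w + B w *v v \<in> fst (F w)" if "w \<in> U0" for w v
    proof -
      have FF: "fst (F w) = range (\<lambda>t. a w + B w *v t)" using U0(5) that by (simp add: fst_oplane)
      then obtain t where "p w = a w + B w *v t" using pin[of w] by auto
      then have "p w + B w *v v = a w + B w *v (t + v)" by (simp add: matrix_vector_right_distrib)
      then show ?thesis using FF by auto
    qed
    have F\<Phi>: "F (\<Phi> x) = F (z x)" if "x \<in> Od" for x
      using fib_same[OF fib] fibmem zO(1)[OF that] unfolding \<Phi>_def by blast
    have p\<Phi>: "p (\<Phi> x) = p (z x)" if "x \<in> Od" for x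
      using F\<Phi>[OF that] unfolding p_def by simp
    have cont\<Phi>: "continuous_on Od \<Phi>"
    proof -
      have 1: "continuous_on Od (\<lambda>x. p (z x))"
        using continuous_on_compose2[OF cont contz] by (meson continuous_on_subset subset_UNIV)
      have 2: "continuous_on Od (\<lambda>x. B (z x))"
        by (rule continuous_on_compose2[OF U0(4) continuous_on_subset[OF contz]]) (auto simp: zO)
      show ?thesis unfolding \<Phi>_def
        by (intro continuous_intros cont_mv 1 2 continuous_on_subset[OF contc]) auto
    qed
    have inj\<Phi>: "inj_on \<Phi> Od"
    proof (rule inj_onI)
      fix x1 x2 assume x1: "x1 \<in> Od" and x2: "x2 \<in> Od" and e: "\<Phi> x1 = \<Phi> x2"
      define w1 where "w1 = z x1"
      define w2 where "w2 = z x2"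
      have w1U: "w1 \<in> U0" and dM: "det (M w1) \<noteq> 0" using zO[OF x1] w1_def by auto
      have FF: "F w1 = F w2" using F\<Phi>[OF x1] F\<Phi>[OF x2] e w1_def w2_def by simp
      have fw1: "fst (F w1) = range (\<lambda>t. a w1 + B w1 *v t)" using U0(5) w1U by (simp add: fst_oplane)
      obtain s1 where s1: "w1 = a w1 + B w1 *v s1" using fib_mem[OF fib, of w1] fw1 by auto
      obtain s2 where s2: "w2 = a w1 + B w1 *v s2" using fib_mem[OF fib, of w2] fw1 FF by auto
      have d: "w2 - w1 = B w1 *v (s2 - s1)"
        using s1 s2 by (metis add_diff_cancel_left matrix_vector_mult_diff_distrib)
      have "transpose B0 *v (w2 - w1) = transpose B0 *v (w2 - y0) - transpose B0 *v (w1 - y0)"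
        by (metis diff_diff_eq2 diff_add_cancel add_diff_cancel_right matrix_vector_mult_diff_distrib)
      also have "\<dots> = 0" using tz w1_def w2_def by simp
      finally have "M w1 *v (s2 - s1) = 0"
        unfolding M_def d by (simp only: matrix_vector_mul_assoc)
      moreover have "inj ((*v) (M w1))"
        using dM inj_matrix_vector_mult invertible_det_nz by blast
      ultimately have "s2 - s1 = 0"
        by (metis injD matrix_vector_mult_0_right)
      then have w12: "w1 = w2" using d by simp
      then have "B w1 *v c x1 = B w1 *v c x2" using e unfolding \<Phi>_def w1_def w2_def by simp
      moreover have "inj ((*v) (B w1))" using U0(5) w1U frame_def by blast
      ultimately have "c x1 = c x2" by (simp add: inj_eq)
      then show "x1 = x2" using w12 unfolding w1_def w2_def z_def by simp
    qed
    obtain g where hom: "homeomorphism Od (\<Phi> ` Od) \<Phi> g"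
      using invariance_of_domain_homeomorphism[OF openO cont\<Phi> _ inj\<Phi>] by auto
    have open\<Phi>Od: "open (\<Phi> ` Od)" by (rule invariance_of_domain[OF cont\<Phi> openO inj\<Phi>])
    define N where "N = {v. transpose B0 *v v = 0}"
    define Oy where "Oy = Od \<inter> {x. x - y0 \<in> N}"
    have \<Phi>Oy: "\<Phi> x = p x" if "x \<in> Oy" for x
    proof -
      have "c x = 0" using that c0 unfolding Oy_def N_def by auto
      then show ?thesis unfolding \<Phi>_def z_def by simp
    qed
    have Veq: "\<Phi> ` Oy = range p \<inter> \<Phi> ` Od"
    proof
      show "\<Phi> ` Oy \<subseteq> range p \<inter> \<Phi> ` Od"
      proof
        fix y assume "y \<in> \<Phi> ` Oy"
        then obtain x where x: "x \<in> Oy" "y = \<Phi> x" by auto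
        then have "y = p x" using \<Phi>Oy by simp
        moreover have "x \<in> Od" using x unfolding Oy_def by auto
        ultimately show "y \<in> range p \<inter> \<Phi> ` Od" using x by (metis IntI imageI rangeI)
      qed
    next
      show "range p \<inter> \<Phi> ` Od \<subseteq> \<Phi> ` Oy"
      proof
        fix y assume "y \<in> range p \<inter> \<Phi> ` Od"
        then obtain x where x: "x \<in> Od" "y = \<Phi> x" and yp: "y \<in> range p" by blast
        have "p y = y" using yp pp by auto
        then have "p (z x) = \<Phi> x" using p\<Phi>[OF x(1)] x(2) by simp
        then have "B (z x) *v c x = 0" unfolding \<Phi>_def by simp
        moreover have "inj ((*v) (B (z x)))" using U0(5) zO(1)[OF x(1)] frame_def by blast
        ultimately have "c x = 0" by (metis injD matrix_vector_mult_0_right)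
        then have "x \<in> Oy" using c0 x(1) unfolding Oy_def N_def by auto
        then show "y \<in> \<Phi> ` Oy" using x by auto
      qed
    qed
    have y0Oy: "y0 \<in> Oy" using y0O unfolding Oy_def N_def by simp
    have subN: "subspace N" unfolding N_def
      by (rule linear_subspace_kernel) (rule matrix_vector_mul_linear)
    have Neq: "N = {y \<in> UNIV. \<forall>x \<in> range ((*v) B0). orthogonal x y}"
    proof (intro set_eqI iffI)
      fix y assume "y \<in> N"
      then show "y \<in> {y \<in> UNIV. \<forall>x \<in> range ((*v) B0). orthogonal x y}"
        unfolding N_def orthogonal_def
        using inner_transpose[of B0 y] by (auto simp: inner_commute)
    next
      fix y assume "y \<in> {y \<in> UNIV. \<forall>x \<in> range ((*v) B0). orthogonal x y}"
      then have "inner (B0 *v (transpose B0 *v y)) y = 0" unfolding orthogonal_def by auto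
      then have "inner (transpose B0 *v y) (transpose B0 *v y) = 0"
        using inner_transpose[of B0 y "transpose B0 *v y"] by (simp add: inner_commute)
      then show "y \<in> N" unfolding N_def by simp
    qed
    have "dim N + dim (range ((*v) B0)) = dim (UNIV :: (real^'n) set)"
      unfolding Neq
      by (rule dim_subspace_orthogonal_to_vectors)
         (auto simp: subspace_UNIV linear_subspace_image matrix_vector_mul_linear)
    moreover have "dim (range ((*v) B0)) = CARD('k)"
      using rank_dim_range[of B0] full_rank_injective[of B0] fB0 by simp
    ultimately have dimN: "dim N = CARD('n) - CARD('k)" by simp
    define W where "W = (+) (-y0) ` Oy"
    have WN: "W = N \<inter> (+) (-y0) ` Od"
      unfolding W_def Oy_def by force
    have openW: "openin (top_of_set N) W"
      unfolding WN by (intro openin_open_Int open_translation openO)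
    have "homeomorphism Oy (\<Phi> ` Oy) \<Phi> g"
      by (rule homeomorphism_of_subsets[OF hom]) (auto simp: Oy_def)
    then have "\<Phi> ` Oy homeomorphic Oy" using homeomorphic_def homeomorphic_sym by blast
    also have "Oy homeomorphic W" unfolding W_def by (rule homeomorphic_translation)
    finally have hW: "\<Phi> ` Oy homeomorphic W" .
    show "\<exists>V. openin (top_of_set (range p)) V \<and> y0 \<in> V \<and>
        (\<exists>(T::(real^'n) set) W. subspace T \<and> dim T = CARD('n) - CARD('k) \<and>
           openin (top_of_set T) W \<and> V homeomorphic W)"
    proof (intro exI conjI)
      show "openin (top_of_set (range p)) (\<Phi> ` Oy)" unfolding Veq
        by (rule openin_open_Int[OF open\<Phi>Od])
      show "y0 \<in> \<Phi> ` Oy" using y0Oy \<Phi>Oy py0 by force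
    qed (rule subN, rule dimN, rule openW, rule hW)
  qed
qed

theorem lemma3p1:
  fixes F :: "real^'n \<Rightarrow> (real^'n) set \<times> (real^'k^'n) set"
  assumes "oriented_plane_fibration F"
  defines "p \<equiv> (\<lambda>x. closest_point (fst (F x)) 0)"
  shows "connected (range p) \<and> contractible (range p) \<and>
         top_submanifold (CARD('n) - CARD('k)) (range p)"
proof (intro conjI)
  have cont: "continuous_on UNIV p" unfolding p_def by (rule p_cont[OF assms(1)])
  show "connected (range p)" by (rule connected_continuous_image[OF cont connected_UNIV])
  have pin: "p x \<in> fst (F x)" for x
  proof -
    obtain U a B where "x \<in> U" "\<forall>y\<in>U. frame (B y) \<and> F y = oplane (a y) (B y)"
      using fib_loc[OF assms(1), of x] by blast
    then have "F x = oplane (a x) (B x)" by auto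
    then show ?thesis unfolding p_def
      using plane_props closest_point_in_set by (metis fst_oplane)
  qed
  have pp: "p (p x) = p x" for x
    using fib_same[OF assms(1)] pin unfolding p_def by metis
  have "range p retract_of UNIV"
    unfolding retract_of_def retraction_def using cont pp by auto
  then show "contractible (range p)"
    by (rule retract_of_contractible[OF contractible_UNIV])
  show "top_submanifold (CARD('n) - CARD('k)) (range p)"
    unfolding p_def by (rule manifold_part[OF assms(1)])
qed

end
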